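(* For any integer $n\ge0$, $B^*$ maximizes $j$, i.e. $j(D)\le j(B^* )$ for all $D\ge0$, where $$j(D):=\frac{1}{(F_{2n+1}+G_{2n+1})(D)}\left[D^{2n+1}+(B^* )^{2n+1}\frac{G_{2n+1}(D)}{F_{2n+1}(B^* )}\right].$$
   Context: $F_q(y):=\int_0^\infty u^{q-1}e^{yu-u^2/2}\,\mathrm{d}u$ and $G_q(y):=F_q(-y)$. $B^*>0$ is the unique zero of the strictly decreasing function $B\mapsto(2n+1)-BF'_{2n+1}(B)/F_{2n+1}(B)$. Moreover, $\frac{\partial}{\partial B}\frac{B^{2n+1}}{F_{2n+1}(B)}>0$ iff $B<B^*$. *)

theory Defs
  imports "HOL-Analysis.Analysis"
begin

definition F :: "nat \<Rightarrow> real \<Rightarrow> real" where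
  "F q y = (\<integral>u\<in>{0<..}. u ^ (q - 1) * exp (y * u - u\<^sup>2 / 2) \<partial>lborel)"

definition G :: "nat \<Rightarrow> real \<Rightarrow> real" where
  "G q y = F q (- y)"

definition j :: "nat \<Rightarrow> real \<Rightarrow> real \<Rightarrow> real" where
  "j n Bs D = (D ^ (2*n+1) + Bs ^ (2*n+1) * G (2*n+1) D / F (2*n+1) Bs)
              / (F (2*n+1) D + G (2*n+1) D)"

end

theory Submission
  imports Defs "HOL-Probability.Probability"
begin

definition Fk :: "nat \<Rightarrow> real \<Rightarrow> real" where
  "Fk k y = (\<integral>u\<in>{0<..}. u ^ k * exp (y * u - u\<^sup>2 / 2) \<partial>lborel)"

lemma F_Fk: "F q y = Fk (q - 1) y"
  unfolding F_def Fk_def by simp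

lemma pow_le_fact_exp:
  fixes u :: real assumes "u \<ge> 0" shows "u ^ k \<le> fact k * exp u"
proof -
  obtain t where t: "\<bar>t\<bar> \<le> \<bar>u\<bar>" "exp u = (\<Sum>m<Suc k. u ^ m / fact m) + exp t / fact (Suc k) * u ^ Suc k"
    using Maclaurin_exp_le[of u "Suc k"] by blast
  have "(\<lambda>m. u ^ m / fact m) k \<le> sum (\<lambda>m. u ^ m / fact m) {..<Suc k}"
    by (rule member_le_sum) (use assms in auto)
  also have "\<dots> \<le> exp u" using t assms by simp
  finally show ?thesis by (simp add: field_simps)
qed

lemma meas_W: "set_borel_measurable lborel {0<..} (\<lambda>u::real. u ^ k * exp (y * u - u\<^sup>2 / 2))"
  unfolding set_borel_measurable_def
  by (intro borel_measurable_scaleR borel_measurable_indicator borel_measurable_continuous_onI continuous_intros) auto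

lemma int_W: "set_integrable lborel {0<..} (\<lambda>u::real. u ^ k * exp (y * u - u\<^sup>2 / 2))"
proof (rule set_integrable_bound[OF _ meas_W])
  let ?f = "\<lambda>u. (fact k * exp ((y+1)\<^sup>2/2) * sqrt (2*pi)) * normal_density (y+1) 1 u"
  show "set_integrable lborel {0<..} ?f"
    unfolding set_integrable_def
    by (rule integrable_mult_indicator) auto
  show "AE x in lborel. x \<in> {0<..} \<longrightarrow> norm (x ^ k * exp (y * x - x\<^sup>2 / 2)) \<le> norm (?f x)"
  proof (intro AE_I2 impI)
    fix x :: real assume x: "x \<in> {0<..}"
    have e: "exp ((y+1)*x - x\<^sup>2/2) = exp ((y+1)\<^sup>2/2) * sqrt (2*pi) * normal_density (y+1) 1 x"
      unfolding normal_density_def by (simp add: exp_add[symmetric] power2_eq_square field_simps)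
    have "norm (x ^ k * exp (y * x - x\<^sup>2 / 2)) = x ^ k * exp (y * x - x\<^sup>2 / 2)" using x by simp
    also have "\<dots> \<le> fact k * exp x * exp (y * x - x\<^sup>2 / 2)"
      using pow_le_fact_exp[of x k] x by (intro mult_right_mono) auto
    also have "\<dots> = fact k * exp ((y+1)*x - x\<^sup>2/2)" by (simp add: exp_add[symmetric] algebra_simps)
    also have "\<dots> = ?f x" using e by simp
    also have "\<dots> \<le> norm (?f x)" by simp
    finally show "norm (x ^ k * exp (y * x - x\<^sup>2 / 2)) \<le> norm (?f x)" .
  qed
qed

lemma Fk_pos: "Fk k y > 0"
proof -
  let ?g = "\<lambda>u::real. indicator {0<..} u * (u ^ k * exp (y * u - u\<^sup>2 / 2))"
  have int: "integrable lborel ?g" using int_W[of k y] unfolding set_integrable_def by simp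
  have eq: "Fk k y = integral\<^sup>L lborel ?g" unfolding Fk_def set_lebesgue_integral_def by simp
  have nn: "AE x in lborel. 0 \<le> ?g x" by (intro AE_I2) (auto simp: indicator_def)
  have "Fk k y \<ge> 0" unfolding eq by (intro integral_nonneg_AE nn)
  moreover have "Fk k y \<noteq> 0"
  proof
    assume "Fk k y = 0"
    then have AEg: "AE x in lborel. ?g x = 0" using integral_nonneg_eq_0_iff_AE[OF int nn] eq by simp
    have H: "\<forall>x::real. ?g x = 0 \<longrightarrow> x \<le> 0"
    proof (intro allI impI, rule ccontr)
      fix x :: real assume "?g x = 0" "\<not> x \<le> 0"
      then show False by (simp add: indicator_def)
    qed
    have "AE x in lborel. (x::real) \<le> 0"
      by (rule AE_mp[OF AEg], rule AE_I2) (use H in blast)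
    then obtain N where N: "{x \<in> space lborel. \<not> x \<le> (0::real)} \<subseteq> N" "emeasure lborel N = 0" "N \<in> sets lborel"
      by (auto elim!: AE_E)
    have "{0<..1::real} \<subseteq> N" using N(1) by auto
    then have "emeasure lborel {0<..1::real} \<le> emeasure lborel N" by (intro emeasure_mono N(3))
    then show False using N(2) by simp
  qed
  ultimately show ?thesis by linarith
qed

lemma exp_taylor2: "\<bar>exp (x::real) - 1 - x\<bar> \<le> exp \<bar>x\<bar> * x\<^sup>2 / 2"
proof -
  obtain t where t: "\<bar>t\<bar> \<le> \<bar>x\<bar>" "exp x = (\<Sum>m<2. x ^ m / fact m) + exp t / fact 2 * x ^ 2"
    using Maclaurin_exp_le[of x 2] by blast
  have e: "exp x - 1 - x = exp t / 2 * x\<^sup>2" using t(2) by (simp add: numeral_2_eq_2)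
  have a: "\<bar>exp x - 1 - x\<bar> = exp t / 2 * x\<^sup>2" unfolding e by simp
  moreover have "exp t * x\<^sup>2 \<le> exp \<bar>x\<bar> * x\<^sup>2" using t(1) by (intro mult_right_mono) auto
  ultimately show ?thesis unfolding a by simp
qed


lemma Fk_bound:
  assumes h: "\<bar>h\<bar> \<le> 1"
  shows "\<bar>Fk k (y+h) - Fk k y - h * Fk (Suc k) y\<bar>
     \<le> h\<^sup>2 / 2 * (\<integral>u\<in>{0<..}. u ^ Suc (Suc k) * exp ((y+1) * u - u\<^sup>2 / 2) \<partial>lborel)"
proof -
  let ?w = "\<lambda>u::real. u ^ k * exp (y * u - u\<^sup>2 / 2)"
  let ?K = "\<lambda>u::real. u ^ Suc (Suc k) * exp ((y+1) * u - u\<^sup>2 / 2)"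
  let ?g = "\<lambda>u::real. u ^ k * exp ((y+h) * u - u\<^sup>2 / 2) - u ^ k * exp (y * u - u\<^sup>2 / 2)
              - h * (u ^ Suc k * exp (y * u - u\<^sup>2 / 2))"
  have i1: "set_integrable lborel {0<..} (\<lambda>u::real. u ^ k * exp ((y+h) * u - u\<^sup>2 / 2))" by (rule int_W)
  have i2: "set_integrable lborel {0<..} ?w" by (rule int_W)
  have i3: "set_integrable lborel {0<..} (\<lambda>u::real. h * (u ^ Suc k * exp (y * u - u\<^sup>2 / 2)))"
    by (intro set_integrable_mult_right int_W)
  have iK: "set_integrable lborel {0<..} ?K" by (rule int_W)
  have ig: "set_integrable lborel {0<..} ?g" using i1 i2 i3 by (intro set_integral_diff(1)) auto
  have intg: "(\<integral>u\<in>{0<..}. ?g u \<partial>lborel) = Fk k (y+h) - Fk k y - h * Fk (Suc k) y"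
    unfolding Fk_def
    by (subst set_integral_diff(2)[OF set_integral_diff(1)[OF i1 i2] i3],
        subst set_integral_diff(2)[OF i1 i2]) simp
  have pt: "\<bar>?g u\<bar> \<le> h\<^sup>2 / 2 * ?K u" if u: "u \<in> {0<..}" for u
  proof -
    have u0: "u > 0" using u by simp
    have "?g u = ?w u * (exp (h*u) - 1 - h*u)"
      by (simp add: algebra_simps exp_add[symmetric])
    then have "\<bar>?g u\<bar> = ?w u * \<bar>exp (h*u) - 1 - h*u\<bar>" using u0 by (simp add: abs_mult)
    also have "\<dots> \<le> ?w u * (exp \<bar>h*u\<bar> * (h*u)\<^sup>2 / 2)"
      using u0 exp_taylor2[of "h*u"] by (intro mult_left_mono) auto
    also have "\<dots> \<le> ?w u * (exp u * (h*u)\<^sup>2 / 2)"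
    proof -
      have "\<bar>h*u\<bar> \<le> u" using h u0 by (simp add: abs_mult mult_left_le_one_le)
      then have "exp \<bar>h*u\<bar> \<le> exp u" by simp
      then show ?thesis using u0 by (intro mult_left_mono divide_right_mono mult_right_mono) auto
    qed
    also have "\<dots> = h\<^sup>2 / 2 * ?K u"
      by (simp add: algebra_simps power2_eq_square exp_add[symmetric])
    finally show ?thesis .
  qed
  have up: "(\<integral>u\<in>{0<..}. ?g u \<partial>lborel) \<le> (\<integral>u\<in>{0<..}. h\<^sup>2 / 2 * ?K u \<partial>lborel)"
  proof (rule set_integral_mono[OF ig])
    show "set_integrable lborel {0<..} (\<lambda>u. h\<^sup>2 / 2 * ?K u)" by (intro set_integrable_mult_right iK)
    fix u :: real assume "u \<in> {0<..}"
    from pt[OF this] show "?g u \<le> h\<^sup>2 / 2 * ?K u" by linarith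
  qed
  have lo: "(\<integral>u\<in>{0<..}. (- (h\<^sup>2 / 2)) * ?K u \<partial>lborel) \<le> (\<integral>u\<in>{0<..}. ?g u \<partial>lborel)"
  proof (rule set_integral_mono[OF _ ig])
    show "set_integrable lborel {0<..} (\<lambda>u. (- (h\<^sup>2 / 2)) * ?K u)"
      by (intro set_integrable_mult_right iK)
    fix u :: real assume "u \<in> {0<..}"
    from pt[OF this] show "(- (h\<^sup>2 / 2)) * ?K u \<le> ?g u" by linarith
  qed
  have eqlo: "(\<integral>u\<in>{0<..}. (- (h\<^sup>2 / 2)) * ?K u \<partial>lborel) = - (h\<^sup>2 / 2 * (\<integral>u\<in>{0<..}. ?K u \<partial>lborel))"
    by (subst set_integral_mult_right) simp
  have equp: "(\<integral>u\<in>{0<..}. h\<^sup>2 / 2 * ?K u \<partial>lborel) = h\<^sup>2 / 2 * (\<integral>u\<in>{0<..}. ?K u \<partial>lborel)"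
    by (rule set_integral_mult_right)
  show ?thesis unfolding abs_le_iff using up lo eqlo equp unfolding intg by linarith
qed

lemma Fk_deriv: "(Fk k has_real_derivative Fk (Suc k) y) (at y)"
proof -
  define C where "C = (\<integral>u\<in>{0<..}. u ^ Suc (Suc k) * exp ((y+1) * u - u\<^sup>2 / 2) \<partial>lborel)"
  let ?M = "Fk (Suc k) y"
  have ev: "eventually (\<lambda>h::real. h \<noteq> 0 \<and> \<bar>h\<bar> < 1) (at 0)"
    unfolding eventually_at by (intro exI[of _ 1]) auto
  have "((\<lambda>h. (Fk k (y + h) - Fk k y) / h - ?M) \<longlongrightarrow> 0) (at 0)"
  proof (rule Lim_null_comparison)
    show "eventually (\<lambda>h. norm ((Fk k (y + h) - Fk k y) / h - ?M) \<le> \<bar>h\<bar> * C / 2) (at 0)"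
    proof (rule eventually_mono[OF ev])
      fix h :: real assume hh: "h \<noteq> 0 \<and> \<bar>h\<bar> < 1"
      have "(Fk k (y + h) - Fk k y) / h - ?M = (Fk k (y + h) - Fk k y - h * ?M) / h"
        using hh by (simp add: field_simps)
      then have "norm ((Fk k (y + h) - Fk k y) / h - ?M) = \<bar>Fk k (y + h) - Fk k y - h * ?M\<bar> / \<bar>h\<bar>"
        by simp
      also have "\<dots> \<le> (h\<^sup>2 / 2 * C) / \<bar>h\<bar>"
        using Fk_bound[of h k y] hh unfolding C_def by (intro divide_right_mono) auto
      also have "\<dots> = \<bar>h\<bar> * C / 2" using hh by (simp add: power2_eq_square field_simps abs_mult_self_eq)
      finally show "norm ((Fk k (y + h) - Fk k y) / h - ?M) \<le> \<bar>h\<bar> * C / 2" .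
    qed
    show "((\<lambda>h::real. \<bar>h\<bar> * C / 2) \<longlongrightarrow> 0) (at 0)"
      by (rule tendsto_eq_intros refl | simp)+
  qed
  then have "((\<lambda>h. (Fk k (y + h) - Fk k y) / h) \<longlongrightarrow> ?M) (at 0)"
    by (rule LIM_zero_cancel)
  then show ?thesis unfolding DERIV_def .
qed


lemma Fk_jensen:
  fixes B D m :: real
  shows "exp ((D-B)*m) * ((1 - (D-B)*m) * Fk k B + (D-B) * Fk (Suc k) B) \<le> Fk k D"
proof -
  define E where "E = exp ((D-B)*m)"
  let ?w = "\<lambda>u::real. u ^ k * exp (B * u - u\<^sup>2 / 2)"
  let ?v = "\<lambda>u::real. u ^ Suc k * exp (B * u - u\<^sup>2 / 2)"
  let ?r = "\<lambda>u. (E * (1 - (D-B)*m)) * ?w u + (E * (D-B)) * ?v u"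
  have i1: "set_integrable lborel {0<..} (\<lambda>u. (E * (1 - (D-B)*m)) * ?w u)"
    by (intro set_integrable_mult_right int_W)
  have i2: "set_integrable lborel {0<..} (\<lambda>u. (E * (D-B)) * ?v u)"
    by (intro set_integrable_mult_right int_W)
  have ir: "set_integrable lborel {0<..} ?r" using i1 i2 by (rule set_integral_add(1))
  have intr: "(\<integral>u\<in>{0<..}. ?r u \<partial>lborel) = E * ((1 - (D-B)*m) * Fk k B + (D-B) * Fk (Suc k) B)"
    unfolding set_integral_add(2)[OF i1 i2] Fk_def set_integral_mult_right
    by (simp add: algebra_simps)
  have "(\<integral>u\<in>{0<..}. ?r u \<partial>lborel) \<le> Fk k D"
    unfolding Fk_def
  proof (rule set_integral_mono[OF ir int_W])
    fix u :: real assume u: "u \<in> {0<..}"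
    have w0: "?w u \<ge> 0" using u by simp
    have "?r u = ?w u * (E * (1 + (D-B)*(u - m)))"
      by (simp add: algebra_simps)
    also have "\<dots> \<le> ?w u * (E * exp ((D-B)*(u-m)))"
      using w0 exp_ge_add_one_self[of "(D-B)*(u-m)"] unfolding E_def
      by (intro mult_left_mono) auto
    also have "\<dots> = u ^ k * exp (D * u - u\<^sup>2 / 2)"
      unfolding E_def by (simp add: exp_add[symmetric] algebra_simps)
    finally show "?r u \<le> u ^ k * exp (D * u - u\<^sup>2 / 2)" .
  qed
  then show ?thesis using intr unfolding E_def by simp
qed

lemma pow_le_exp_lin:
  fixes D B :: real assumes "B > 0" "D \<ge> 0"
  shows "(D/B) ^ q \<le> exp ((D-B) * (real q / B))"
proof -
  have "exp ((D-B) * (real q / B)) = exp (real q * (D/B - 1))"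
    using assms by (simp add: field_simps)
  also have "\<dots> = exp (D/B - 1) ^ q" by (rule exp_of_nat_mult)
  finally have e: "exp ((D-B) * (real q / B)) = exp (D/B - 1) ^ q" .
  have "D/B \<le> exp (D/B - 1)" using exp_ge_add_one_self[of "D/B - 1"] by simp
  then have "(D/B) ^ q \<le> exp (D/B - 1) ^ q" using assms by (intro power_mono) auto
  then show ?thesis using e by simp
qed

theorem lemma4p2:
  fixes n :: nat and Bs D :: real
  assumes "Bs > 0"
    and "real (2*n+1) - Bs * deriv (F (2*n+1)) Bs / F (2*n+1) Bs = 0"
    and "D \<ge> 0"
  shows "j n Bs D \<le> j n Bs Bs"
proof -
  define q where "q = 2*n+1"
  define k where "k = 2*n"
  have Fq: "F q = Fk k" unfolding q_def k_def by (rule ext) (simp add: F_Fk)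
  have Gq: "G q y = Fk k (- y)" for y unfolding G_def Fq ..
  define FB where "FB = Fk k Bs"
  define M where "M = Fk (Suc k) Bs"
  have FB0: "FB > 0" unfolding FB_def by (rule Fk_pos)
  have dv: "deriv (F q) Bs = M" unfolding Fq M_def by (rule DERIV_imp_deriv[OF Fk_deriv])
  from assms(2) have "real q - Bs * M / FB = 0" unfolding q_def[symmetric] dv[symmetric] Fq FB_def .
  then have MM: "M = real q / Bs * FB" using FB0 assms(1) by (simp add: field_simps)
  have J: "exp ((D-Bs) * (real q / Bs)) * FB \<le> Fk k D"
    using Fk_jensen[of D Bs "real q / Bs" k] unfolding FB_def[symmetric] M_def[symmetric] MM
    by (simp add: algebra_simps)
  have P: "(D/Bs) ^ q \<le> exp ((D-Bs) * (real q / Bs))" by (rule pow_le_exp_lin[OF assms(1,3)])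
  have key: "D ^ q * FB \<le> Bs ^ q * Fk k D"
  proof -
    have "D ^ q * FB = Bs ^ q * ((D/Bs) ^ q * FB)" using assms(1) by (simp add: power_divide)
    also have "\<dots> \<le> Bs ^ q * (exp ((D-Bs) * (real q / Bs)) * FB)"
      using P FB0 assms(1) by (intro mult_left_mono mult_right_mono) auto
    also have "\<dots> \<le> Bs ^ q * Fk k D" using J assms(1) by (intro mult_left_mono) auto
    finally show ?thesis .
  qed
  have FD: "Fk k D > 0" "Fk k (-D) > 0" "Fk k (-Bs) > 0" by (rule Fk_pos)+
  define c where "c = Bs ^ q / FB"
  have num: "Bs ^ q + Bs ^ q * Fk k (-Bs) / FB = c * (FB + Fk k (-Bs))"
    unfolding c_def using FB0 by (simp add: field_simps)
  have jB: "j n Bs Bs = c"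
    unfolding j_def q_def[symmetric] Gq Fq FB_def[symmetric] num
    using FB0 FD by simp
  have "D ^ q \<le> c * Fk k D" using key FB0 unfolding c_def by (simp add: field_simps)
  then have "D ^ q + c * Fk k (-D) \<le> c * (Fk k D + Fk k (-D))" by (simp add: algebra_simps)
  then have "(D ^ q + c * Fk k (-D)) / (Fk k D + Fk k (-D)) \<le> c"
    using FD by (simp add: divide_le_eq)
  moreover have "j n Bs D = (D ^ q + c * Fk k (-D)) / (Fk k D + Fk k (-D))"
    unfolding j_def q_def[symmetric] Gq Fq c_def FB_def by simp
  ultimately show ?thesis using jB by simp
qed

end
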